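(* Every multi-parameter random simplicial complex $X\sim X(n,\mathbf{p})$ is homogeneous and spatially independent. Conversely, for every homogeneous and spatially independent random subcomplex $X$ of $\triangle_n$ there exists a multi-parameter $\mathbf{p}=(p_0,\dots,p_{n-1})\in[0,1]^n$ such that $X\sim X(n,\mathbf{p})$.
   Context: $\triangle_n=2^{[n]}$ is the complete simplicial complex on $[n]$; a subcomplex is a family $Y\subset2^{[n]}$ closed under taking subsets, $S_n$ is the set of subcomplexes, and a random subcomplex is an $S_n$-valued random variable. $X$ is homogeneous if $X$ and $gX=\{g(\sigma):\sigma\in X\}$ have the same distribution for every permutation $g$ of $[n]$; spatially independent if $\mathbb{P}(Y_1\cup Y_2\subset X)\mathbb{P}(Y_1\cap Y_2\subset X)=\mathbb{P}(Y_1\subset X)\mathbb{P}(Y_2\subset X)$ for all $Y_1,Y_2\in S_n$. The multi-parameter random simplicial complex $X(n,\mathbf{p})$: retain each vertex of $[n]$ independently with probability $p_0$; each edge with both endpoints retained is added independently with probability $p_1$; iteratively for $i=2,\dots,n-1$, each $i$-simplex (subset of size $i+1$) of $[n]$ all of whose proper faces are already present is added independently with probability $p_i$. Equivalently $\mathbb{P}(X=Y)=\prod_{i=0}^{n-1}p_i^{f_i(Y)}(1-p_i)^{e_i(Y)}$, where $f_i(Y)$ is the number of $i$-simplices of $Y$ and $e_i(Y)$ the number of $i$-simplices $\sigma\notin Y$ all of whose proper subsets lie in $Y$. *)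

theory Defs
  imports "HOL-Probability.Probability" "HOL-Combinatorics.Permutations"
begin

text \<open>Vertex set [n] is rendered as {0..<n}. Simplices are nonempty subsets of [n];
  an i-simplex is a subset of size i+1.\<close>

definition subcomplexes :: "nat \<Rightarrow> nat set set set" where
  "subcomplexes n = {Y. (\<forall>\<sigma>\<in>Y. \<sigma> \<noteq> {} \<and> \<sigma> \<subseteq> {0..<n})
                        \<and> (\<forall>\<sigma>\<in>Y. \<forall>\<tau>. \<tau> \<subseteq> \<sigma> \<and> \<tau> \<noteq> {} \<longrightarrow> \<tau> \<in> Y)}"

definition random_subcomplex :: "nat \<Rightarrow> nat set set pmf \<Rightarrow> bool" where
  "random_subcomplex n X \<longleftrightarrow> set_pmf X \<subseteq> subcomplexes n"

definition homogeneous :: "nat \<Rightarrow> nat set set pmf \<Rightarrow> bool" where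
  "homogeneous n X \<longleftrightarrow>
     (\<forall>g. g permutes {0..<n} \<longrightarrow> map_pmf (\<lambda>Y. (\<lambda>\<sigma>. g ` \<sigma>) ` Y) X = X)"

definition spatially_independent :: "nat \<Rightarrow> nat set set pmf \<Rightarrow> bool" where
  "spatially_independent n X \<longleftrightarrow>
     (\<forall>Y1\<in>subcomplexes n. \<forall>Y2\<in>subcomplexes n.
        measure_pmf.prob X {Z. Y1 \<union> Y2 \<subseteq> Z} * measure_pmf.prob X {Z. Y1 \<inter> Y2 \<subseteq> Z}
        = measure_pmf.prob X {Z. Y1 \<subseteq> Z} * measure_pmf.prob X {Z. Y2 \<subseteq> Z})"

definition f_num :: "nat set set \<Rightarrow> nat \<Rightarrow> nat" where
  "f_num Y i = card {\<sigma>\<in>Y. card \<sigma> = i + 1}"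

definition e_num :: "nat \<Rightarrow> nat set set \<Rightarrow> nat \<Rightarrow> nat" where
  "e_num n Y i = card {\<sigma>. \<sigma> \<subseteq> {0..<n} \<and> card \<sigma> = i + 1 \<and> \<sigma> \<notin> Y
                        \<and> (\<forall>\<tau>. \<tau> \<subset> \<sigma> \<and> \<tau> \<noteq> {} \<longrightarrow> \<tau> \<in> Y)}"

definition mp_prob :: "nat \<Rightarrow> (nat \<Rightarrow> real) \<Rightarrow> nat set set \<Rightarrow> real" where
  "mp_prob n p Y = (\<Prod>i<n. p i ^ f_num Y i * (1 - p i) ^ e_num n Y i)"

definition is_multiparam :: "nat \<Rightarrow> (nat \<Rightarrow> real) \<Rightarrow> nat set set pmf \<Rightarrow> bool" where
  "is_multiparam n p X \<longleftrightarrow> random_subcomplex n X \<and>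
     (\<forall>Y\<in>subcomplexes n. pmf X Y = mp_prob n p Y)"

end

theory Submission
  imports Defs
begin

definition Wn :: "nat \<Rightarrow> nat set set" where
  "Wn n = {\<sigma>. \<sigma> \<subseteq> {0..<n} \<and> \<sigma> \<noteq> {}}"

definition ext :: "nat \<Rightarrow> nat set set \<Rightarrow> nat set set" where
  "ext n Y = {\<sigma> \<in> Wn n. \<sigma> \<notin> Y \<and> (\<forall>\<tau>. \<tau> \<subset> \<sigma> \<and> \<tau> \<noteq> {} \<longrightarrow> \<tau> \<in> Y)}"

lemma finite_Wn: "finite (Wn n)"
  by (rule finite_subset[of _ "Pow {0..<n}"]) (auto simp: Wn_def)

lemma sub_Wn: "Y \<in> subcomplexes n \<Longrightarrow> Y \<subseteq> Wn n"
  by (auto simp: subcomplexes_def Wn_def)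

lemma finite_sub: "Y \<in> subcomplexes n \<Longrightarrow> finite Y"
  using finite_subset[OF sub_Wn finite_Wn] .

lemma ext_Wn: "ext n Y \<subseteq> Wn n - Y"
  by (auto simp: ext_def)

lemma finite_ext: "finite (ext n Y)"
  using finite_subset[OF _ finite_Wn] ext_Wn by blast

lemma insert_complex:
  assumes "Y \<in> subcomplexes n" "s \<in> ext n Y"
  shows "insert s Y \<in> subcomplexes n"
proof -
  have Y1: "\<And>\<sigma>. \<sigma>\<in>Y \<Longrightarrow> \<sigma> \<noteq> {} \<and> \<sigma> \<subseteq> {0..<n}"
    and Y2: "\<And>\<sigma> \<tau>. \<sigma>\<in>Y \<Longrightarrow> \<tau> \<subseteq> \<sigma> \<Longrightarrow> \<tau> \<noteq> {} \<Longrightarrow> \<tau> \<in> Y"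
    using assms(1) unfolding subcomplexes_def by blast+
  have s1: "s \<noteq> {}" "s \<subseteq> {0..<n}" and s3: "\<And>\<tau>. \<tau> \<subset> s \<Longrightarrow> \<tau> \<noteq> {} \<Longrightarrow> \<tau> \<in> Y"
    using assms(2) unfolding ext_def Wn_def by blast+
  have A: "\<tau> \<in> insert s Y" if "\<tau> \<subseteq> s" "\<tau> \<noteq> {}" for \<tau>
  proof (cases "\<tau> = s")
    case False thus ?thesis using s3[of \<tau>] that by blast
  qed simp
  show ?thesis unfolding subcomplexes_def
  proof (intro CollectI conjI ballI allI impI)
    fix \<sigma> assume "\<sigma> \<in> insert s Y" thus "\<sigma> \<noteq> {}" "\<sigma> \<subseteq> {0..<n}" using Y1 s1 by blast+
  next
    fix \<sigma> \<tau> assume "\<sigma> \<in> insert s Y" "\<tau> \<subseteq> \<sigma> \<and> \<tau> \<noteq> {}"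
    thus "\<tau> \<in> insert s Y" using A Y2 by blast
  qed
qed

lemma ext_insert:
  assumes "F \<subseteq> ext n Y" "s \<notin> F"
  shows "F \<subseteq> ext n (insert s Y)"
  using assms unfolding ext_def by auto

lemma complex_eq:
  assumes Z: "Z \<in> subcomplexes n" and Y: "Y \<in> subcomplexes n" and "Y \<subseteq> Z"
    and E: "Z \<inter> ext n Y = {}"
  shows "Z = Y"
proof -
  have "\<forall>\<sigma>. card \<sigma> = k \<longrightarrow> \<sigma> \<in> Z \<longrightarrow> \<sigma> \<in> Y" for k
  proof (induction k rule: less_induct)
    case (less k)
    show ?case
    proof (intro allI impI)
      fix \<sigma> assume c: "card \<sigma> = k" and s: "\<sigma> \<in> Z"
      have sW: "\<sigma> \<in> Wn n" using sub_Wn[OF Z] s by blast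
      hence fin: "finite \<sigma>" unfolding Wn_def using finite_subset by blast
      have "\<tau> \<in> Y" if "\<tau> \<subset> \<sigma>" "\<tau> \<noteq> {}" for \<tau>
      proof -
        have "\<tau> \<in> Z" using Z s that unfolding subcomplexes_def by blast
        moreover have "card \<tau> < k" using c that fin psubset_card_mono by blast
        ultimately show ?thesis using less by blast
      qed
      show "\<sigma> \<in> Y"
      proof (rule ccontr)
        assume "\<sigma> \<notin> Y"
        with sW \<open>\<And>\<tau>. \<tau> \<subset> \<sigma> \<Longrightarrow> \<tau> \<noteq> {} \<Longrightarrow> \<tau> \<in> Y\<close> have "\<sigma> \<in> ext n Y"
          unfolding ext_def by blast
        with s E show False by blast
      qed
    qed
  qed
  thus ?thesis using \<open>Y \<subseteq> Z\<close> by blast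
qed

lemma prob_exact:
  assumes supp: "set_pmf X \<subseteq> subcomplexes n" and Y: "Y \<in> subcomplexes n"
  shows "measure_pmf.prob X {Z. Y \<subseteq> Z \<and> Z \<inter> ext n Y = {}} = pmf X Y"
proof -
  have YE: "Y \<inter> ext n Y = {}" by (auto simp: ext_def)
  have "{Z. Y \<subseteq> Z \<and> Z \<inter> ext n Y = {}} \<inter> set_pmf X = {Y} \<inter> set_pmf X"
    using complex_eq[OF _ Y] supp YE by auto
  hence "measure_pmf.prob X {Z. Y \<subseteq> Z \<and> Z \<inter> ext n Y = {}} = measure_pmf.prob X ({Y} \<inter> set_pmf X)"
    by (metis measure_Int_set_pmf)
  also have "\<dots> = pmf X Y" by (simp add: measure_Int_set_pmf measure_pmf_single)
  finally show ?thesis .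
qed

lemma prob_split:
  "measure_pmf.prob X {Z. Y \<subseteq> Z \<and> Z \<inter> F = {}} =
   measure_pmf.prob X {Z. insert s Y \<subseteq> Z \<and> Z \<inter> F = {}} +
   measure_pmf.prob X {Z. Y \<subseteq> Z \<and> Z \<inter> insert s F = {}}"
proof -
  have "{Z. Y \<subseteq> Z \<and> Z \<inter> F = {}} = {Z. insert s Y \<subseteq> Z \<and> Z \<inter> F = {}} \<union> {Z. Y \<subseteq> Z \<and> Z \<inter> insert s F = {}}"
    by auto
  moreover have "{Z. insert s Y \<subseteq> Z \<and> Z \<inter> F = {}} \<inter> {Z. Y \<subseteq> Z \<and> Z \<inter> insert s F = {}} = {}" by auto
  ultimately show ?thesis
    by (simp add: measure_pmf.finite_measure_Union)
qed

lemma L1: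
  assumes supp: "set_pmf X \<subseteq> subcomplexes n"
    and pm: "\<forall>Y\<in>subcomplexes n. pmf X Y = (\<Prod>\<sigma>\<in>Y. q \<sigma>) * (\<Prod>\<sigma>\<in>ext n Y. 1 - q \<sigma>)"
  shows "Y \<in> subcomplexes n \<Longrightarrow> F \<subseteq> ext n Y \<Longrightarrow>
    measure_pmf.prob X {Z. Y \<subseteq> Z \<and> Z \<inter> F = {}} = (\<Prod>\<sigma>\<in>Y. q \<sigma>) * (\<Prod>\<sigma>\<in>F. 1 - q \<sigma>)"
proof (induction "2 * card (Wn n - Y) - card F" arbitrary: Y F rule: less_induct)
  case (less Y F)
  show ?case
  proof (cases "F = ext n Y")
    case True
    then show ?thesis using prob_exact[OF supp less.prems(1)] pm less.prems(1) by simp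
  next
    case False
    then obtain s where s: "s \<in> ext n Y" "s \<notin> F" using less.prems(2) by auto
    have finY: "finite Y" using finite_sub[OF less.prems(1)] .
    have finF: "finite F" using finite_subset[OF less.prems(2) finite_ext] .
    have sY: "s \<notin> Y" "s \<in> Wn n" using s ext_Wn by auto
    have FW: "F \<subseteq> Wn n - insert s Y" using less.prems(2) ext_Wn s by auto
    have c1: "card (Wn n - insert s Y) = card (Wn n - Y) - 1"
      using sY by (metis Diff_insert card_Diff_singleton finite_Diff finite_Wn Diff_iff)
    have c2: "card F \<le> card (Wn n - insert s Y)" by (rule card_mono[OF _ FW]) (simp add: finite_Wn)
    have c3: "card (Wn n - Y) \<ge> 1"
    proof -
      have "Wn n - Y \<noteq> {}" using sY by blast
      thus ?thesis using finite_Wn by (simp add: Suc_le_eq card_gt_0_iff)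
    qed
    have IH1: "measure_pmf.prob X {Z. insert s Y \<subseteq> Z \<and> Z \<inter> F = {}} =
       (\<Prod>\<sigma>\<in>insert s Y. q \<sigma>) * (\<Prod>\<sigma>\<in>F. 1 - q \<sigma>)"
      apply (rule less.hyps)
      using c1 c2 c3 apply linarith
      using insert_complex[OF less.prems(1) s(1)] apply simp
      using ext_insert[OF less.prems(2) s(2)] by simp
    have IH2: "measure_pmf.prob X {Z. Y \<subseteq> Z \<and> Z \<inter> insert s F = {}} =
       (\<Prod>\<sigma>\<in>Y. q \<sigma>) * (\<Prod>\<sigma>\<in>insert s F. 1 - q \<sigma>)"
      apply (rule less.hyps)
      using c1 c2 c3 s finF apply simp
      using less.prems(1) apply simp
      using less.prems(2) s by simp
    show ?thesis
      unfolding prob_split[of X Y F s] IH1 IH2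
      using finY finF sY s by (simp add: algebra_simps)
  qed
qed

lemma L2:
  assumes pi: "\<forall>Y\<in>subcomplexes n. measure_pmf.prob X {Z. Y \<subseteq> Z} = (\<Prod>\<sigma>\<in>Y. q \<sigma>)"
  shows "finite F \<Longrightarrow> \<forall>Y. Y \<in> subcomplexes n \<longrightarrow> F \<subseteq> ext n Y \<longrightarrow>
    measure_pmf.prob X {Z. Y \<subseteq> Z \<and> Z \<inter> F = {}} = (\<Prod>\<sigma>\<in>Y. q \<sigma>) * (\<Prod>\<sigma>\<in>F. 1 - q \<sigma>)"
proof (induction F rule: finite_induct)
  case empty
  then show ?case using pi by simp
next
  case (insert s F)
  show ?case
  proof (intro allI impI)
    fix Y assume Y: "Y \<in> subcomplexes n" and sF: "insert s F \<subseteq> ext n Y"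
    have finY: "finite Y" using finite_sub[OF Y] .
    have sY: "s \<notin> Y" "s \<in> ext n Y" using sF ext_Wn by auto
    have a: "measure_pmf.prob X {Z. insert s Y \<subseteq> Z \<and> Z \<inter> F = {}} =
       (\<Prod>\<sigma>\<in>insert s Y. q \<sigma>) * (\<Prod>\<sigma>\<in>F. 1 - q \<sigma>)"
      using insert.IH insert_complex[OF Y sY(2)] ext_insert[of F n Y s] sF insert.hyps by auto
    have b: "measure_pmf.prob X {Z. Y \<subseteq> Z \<and> Z \<inter> F = {}} =
       (\<Prod>\<sigma>\<in>Y. q \<sigma>) * (\<Prod>\<sigma>\<in>F. 1 - q \<sigma>)"
      using insert.IH Y sF by auto
    show "measure_pmf.prob X {Z. Y \<subseteq> Z \<and> Z \<inter> insert s F = {}} =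
       (\<Prod>\<sigma>\<in>Y. q \<sigma>) * (\<Prod>\<sigma>\<in>insert s F. 1 - q \<sigma>)"
      using prob_split[of X Y F s] a b finY sY insert.hyps by (simp add: algebra_simps)
  qed
qed

lemma Wn_card: "\<sigma> \<in> Wn n \<Longrightarrow> 1 \<le> card \<sigma> \<and> card \<sigma> \<le> n \<and> finite \<sigma>"
proof -
  assume s: "\<sigma> \<in> Wn n"
  hence a: "\<sigma> \<subseteq> {0..<n}" "\<sigma> \<noteq> {}" unfolding Wn_def by blast+
  hence f: "finite \<sigma>" using finite_subset by blast
  have "card \<sigma> \<le> n" using card_mono[OF _ a(1)] by simp
  moreover have "card \<sigma> \<ge> 1" using f a(2) by (simp add: Suc_le_eq card_gt_0_iff)
  ultimately show ?thesis using f by blast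
qed

lemma prod_by_card:
  assumes fin: "finite A" and c: "\<forall>\<sigma>\<in>A. 1 \<le> card \<sigma> \<and> card \<sigma> \<le> n"
  shows "(\<Prod>\<sigma>\<in>A. h (card \<sigma> - 1)) = (\<Prod>i<n. h i ^ card {\<sigma>\<in>A. card \<sigma> = i+1})"
proof -
  have sub: "(\<lambda>\<sigma>. card \<sigma> - 1) ` A \<subseteq> {..<n}" using c by force
  have "(\<Prod>\<sigma>\<in>A. h (card \<sigma> - 1)) = (\<Prod>i<n. \<Prod>\<sigma>\<in>{\<sigma>. \<sigma> \<in> A \<and> card \<sigma> - 1 = i}. h (card \<sigma> - 1))"
    using prod.group[OF fin finite_lessThan sub, of "\<lambda>\<sigma>. h (card \<sigma> - 1)"] by simp
  also have "\<dots> = (\<Prod>i<n. h i ^ card {\<sigma>\<in>A. card \<sigma> = i+1})"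
  proof (rule prod.cong[OF refl])
    fix i
    have e: "{\<sigma>. \<sigma> \<in> A \<and> card \<sigma> - 1 = i} = {\<sigma>\<in>A. card \<sigma> = i+1}" using c by force
    have "(\<Prod>\<sigma>\<in>{\<sigma>. \<sigma> \<in> A \<and> card \<sigma> - 1 = i}. h (card \<sigma> - 1)) = (\<Prod>\<sigma>\<in>{\<sigma>\<in>A. card \<sigma> = i+1}. h i)"
      unfolding e by (rule prod.cong) auto
    thus "(\<Prod>\<sigma>\<in>{\<sigma>. \<sigma> \<in> A \<and> card \<sigma> - 1 = i}. h (card \<sigma> - 1)) = h i ^ card {\<sigma>\<in>A. card \<sigma> = i+1}"
      by simp
  qed
  finally show ?thesis .
qed

lemma mp_eq:
  assumes Y: "Y \<in> subcomplexes n"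
  shows "mp_prob n p Y = (\<Prod>\<sigma>\<in>Y. p (card \<sigma> - 1)) * (\<Prod>\<sigma>\<in>ext n Y. 1 - p (card \<sigma> - 1))"
proof -
  have cY: "\<forall>\<sigma>\<in>Y. 1 \<le> card \<sigma> \<and> card \<sigma> \<le> n" using sub_Wn[OF Y] Wn_card by blast
  have cE: "\<forall>\<sigma>\<in>ext n Y. 1 \<le> card \<sigma> \<and> card \<sigma> \<le> n" using ext_Wn Wn_card by blast
  have e: "e_num n Y i = card {\<sigma>\<in>ext n Y. card \<sigma> = i+1}" for i
  proof -
    have "{\<sigma>. \<sigma> \<subseteq> {0..<n} \<and> card \<sigma> = i + 1 \<and> \<sigma> \<notin> Y
                        \<and> (\<forall>\<tau>. \<tau> \<subset> \<sigma> \<and> \<tau> \<noteq> {} \<longrightarrow> \<tau> \<in> Y)} = {\<sigma>\<in>ext n Y. card \<sigma> = i+1}"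
      unfolding ext_def Wn_def by (auto simp del: atLeastLessThan_iff)
    thus ?thesis unfolding e_num_def by simp
  qed
  have a: "(\<Prod>\<sigma>\<in>Y. p (card \<sigma> - 1)) = (\<Prod>i<n. p i ^ card {\<sigma>\<in>Y. card \<sigma> = i+1})"
    by (rule prod_by_card[OF finite_sub[OF Y] cY])
  have b: "(\<Prod>\<sigma>\<in>ext n Y. 1 - p (card \<sigma> - 1)) = (\<Prod>i<n. (1 - p i) ^ card {\<sigma>\<in>ext n Y. card \<sigma> = i+1})"
    by (rule prod_by_card[OF finite_ext cE, of "\<lambda>i. 1 - p i"])
  show ?thesis
    unfolding mp_prob_def prod.distrib f_num_def e a b by (rule refl)
qed

definition IG :: "(nat \<Rightarrow> nat) \<Rightarrow> nat set set \<Rightarrow> nat set set" where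
  "IG g Y = (\<lambda>\<sigma>. g ` \<sigma>) ` Y"

lemma inj_img: "inj g \<Longrightarrow> inj (\<lambda>\<sigma>. g ` \<sigma>)"
  by (simp add: inj_def inj_image_eq_iff)

lemma IG_subset: "inj g \<Longrightarrow> IG g A \<subseteq> IG g B \<longleftrightarrow> A \<subseteq> B"
  unfolding IG_def by (rule inj_image_subset_iff[OF inj_img])

lemma IG_inv: assumes "g permutes S" shows "IG g (IG (inv g) Y) = Y"
proof -
  have "g ` (inv g ` \<sigma>) = \<sigma>" for \<sigma>
    using permutes_inverses(1)[OF assms] by (simp add: image_image)
  thus ?thesis unfolding IG_def by (simp add: image_image)
qed

lemma prod_IG:
  assumes "inj g"
  shows "(\<Prod>\<sigma>\<in>IG g Y. h (card \<sigma>)) = (\<Prod>\<sigma>\<in>Y. h (card \<sigma>))"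
proof -
  have "(\<Prod>\<sigma>\<in>IG g Y. h (card \<sigma>)) = (\<Prod>\<sigma>\<in>Y. h (card (g ` \<sigma>)))"
    unfolding IG_def by (subst prod.reindex) (auto intro: inj_on_subset[OF inj_img[OF assms]])
  also have "\<dots> = (\<Prod>\<sigma>\<in>Y. h (card \<sigma>))"
    by (rule prod.cong[OF refl]) (simp add: card_image inj_on_subset[OF assms])
  finally show ?thesis .
qed

lemma perm_complex:
  assumes g: "g permutes {0..<n}" and Y: "Y \<in> subcomplexes n"
  shows "IG g Y \<in> subcomplexes n"
proof -
  have Y1: "\<And>\<sigma>. \<sigma>\<in>Y \<Longrightarrow> \<sigma> \<noteq> {} \<and> \<sigma> \<subseteq> {0..<n}"
    and Y2: "\<And>\<sigma> \<tau>. \<sigma>\<in>Y \<Longrightarrow> \<tau> \<subseteq> \<sigma> \<Longrightarrow> \<tau> \<noteq> {} \<Longrightarrow> \<tau> \<in> Y"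
    using Y unfolding subcomplexes_def by blast+
  have im: "g ` {0..<n} = {0..<n}" using permutes_image[OF g] .
  show ?thesis unfolding subcomplexes_def
  proof (intro CollectI conjI ballI allI impI)
    fix \<sigma>' assume "\<sigma>' \<in> IG g Y"
    then obtain \<sigma> where s: "\<sigma> \<in> Y" "\<sigma>' = g ` \<sigma>" unfolding IG_def by blast
    show "\<sigma>' \<noteq> {}" using s Y1 by blast
    show "\<sigma>' \<subseteq> {0..<n}" using s Y1 im by blast
  next
    fix \<sigma>' \<tau> assume a: "\<sigma>' \<in> IG g Y" "\<tau> \<subseteq> \<sigma>' \<and> \<tau> \<noteq> {}"
    then obtain \<sigma> where s: "\<sigma> \<in> Y" "\<sigma>' = g ` \<sigma>" unfolding IG_def by blast
    define \<tau>0 where "\<tau>0 = inv g ` \<tau>"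
    have t: "\<tau> = g ` \<tau>0" unfolding \<tau>0_def using permutes_inverses(1)[OF g] by (simp add: image_image)
    have "\<tau>0 \<subseteq> \<sigma>" using a(2) s(2) t inj_image_subset_iff[OF permutes_inj[OF g]] by blast
    moreover have "\<tau>0 \<noteq> {}" using a(2) t by blast
    ultimately have "\<tau>0 \<in> Y" using Y2 s(1) by blast
    thus "\<tau> \<in> IG g Y" unfolding IG_def t by blast
  qed
qed

lemma complexI:
  assumes "\<And>\<sigma>. \<sigma> \<in> Y \<Longrightarrow> \<sigma> \<noteq> {} \<and> \<sigma> \<subseteq> {0..<n}"
    "\<And>\<sigma> \<tau>. \<sigma> \<in> Y \<Longrightarrow> \<tau> \<subseteq> \<sigma> \<Longrightarrow> \<tau> \<noteq> {} \<Longrightarrow> \<tau> \<in> Y"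
  shows "Y \<in> subcomplexes n"
  unfolding subcomplexes_def using assms by simp

lemma complexD:
  assumes "Y \<in> subcomplexes n"
  shows "\<And>\<sigma>. \<sigma> \<in> Y \<Longrightarrow> \<sigma> \<noteq> {} \<and> \<sigma> \<subseteq> {0..<n}"
    "\<And>\<sigma> \<tau>. \<sigma> \<in> Y \<Longrightarrow> \<tau> \<subseteq> \<sigma> \<Longrightarrow> \<tau> \<noteq> {} \<Longrightarrow> \<tau> \<in> Y"
  using assms unfolding subcomplexes_def by blast+

lemma union_complex: assumes a: "A \<in> subcomplexes n" and b: "B \<in> subcomplexes n" shows "A \<union> B \<in> subcomplexes n"
proof (rule complexI)
  fix \<sigma> assume "\<sigma> \<in> A \<union> B"
  thus "\<sigma> \<noteq> {} \<and> \<sigma> \<subseteq> {0..<n}" using complexD(1)[OF a] complexD(1)[OF b] by blast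
next
  fix \<sigma> \<tau> assume "\<sigma> \<in> A \<union> B" "\<tau> \<subseteq> \<sigma>" "\<tau> \<noteq> {}"
  thus "\<tau> \<in> A \<union> B" using complexD(2)[OF a, of \<sigma> \<tau>] complexD(2)[OF b, of \<sigma> \<tau>] by blast
qed

lemma inter_complex: assumes a: "A \<in> subcomplexes n" and b: "B \<in> subcomplexes n" shows "A \<inter> B \<in> subcomplexes n"
proof (rule complexI)
  fix \<sigma> assume "\<sigma> \<in> A \<inter> B"
  thus "\<sigma> \<noteq> {} \<and> \<sigma> \<subseteq> {0..<n}" using complexD(1)[OF a] complexD(1)[OF b] by blast
next
  fix \<sigma> \<tau> assume "\<sigma> \<in> A \<inter> B" "\<tau> \<subseteq> \<sigma>" "\<tau> \<noteq> {}"
  thus "\<tau> \<in> A \<inter> B" using complexD(2)[OF a, of \<sigma> \<tau>] complexD(2)[OF b, of \<sigma> \<tau>] by blast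
qed

lemma prob_all: "measure_pmf.prob X {Z. Y \<subseteq> Z \<and> Z \<inter> {} = {}} = measure_pmf.prob X {Z. Y \<subseteq> Z}"
  by simp

lemma pmf_from_pi:
  assumes supp: "set_pmf X \<subseteq> subcomplexes n"
    and pi: "\<forall>Y\<in>subcomplexes n. measure_pmf.prob X {Z. Y \<subseteq> Z} = (\<Prod>\<sigma>\<in>Y. q \<sigma>)"
    and Y: "Y \<in> subcomplexes n"
  shows "pmf X Y = (\<Prod>\<sigma>\<in>Y. q \<sigma>) * (\<Prod>\<sigma>\<in>ext n Y. 1 - q \<sigma>)"
  using L2[OF pi finite_ext] Y prob_exact[OF supp Y] by simp

lemma dir1:
  assumes mp: "is_multiparam n p X"
  shows "homogeneous n X \<and> spatially_independent n X"
proof -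
  define q where "q \<sigma> = p (card \<sigma> - 1)" for \<sigma> :: "nat set"
  have supp: "set_pmf X \<subseteq> subcomplexes n" using mp unfolding is_multiparam_def random_subcomplex_def by blast
  have pm: "\<forall>Y\<in>subcomplexes n. pmf X Y = (\<Prod>\<sigma>\<in>Y. q \<sigma>) * (\<Prod>\<sigma>\<in>ext n Y. 1 - q \<sigma>)"
    using mp mp_eq unfolding is_multiparam_def q_def by simp
  have pi: "\<forall>Y\<in>subcomplexes n. measure_pmf.prob X {Z. Y \<subseteq> Z} = (\<Prod>\<sigma>\<in>Y. q \<sigma>)"
  proof
    fix Y assume Y: "Y \<in> subcomplexes n"
    show "measure_pmf.prob X {Z. Y \<subseteq> Z} = (\<Prod>\<sigma>\<in>Y. q \<sigma>)"
      using L1[OF supp pm Y, of "{}"] by simp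
  qed
  have si: "spatially_independent n X"
    unfolding spatially_independent_def
  proof (intro ballI)
    fix Y1 Y2 assume a: "Y1 \<in> subcomplexes n" "Y2 \<in> subcomplexes n"
    show "measure_pmf.prob X {Z. Y1 \<union> Y2 \<subseteq> Z} * measure_pmf.prob X {Z. Y1 \<inter> Y2 \<subseteq> Z} =
          measure_pmf.prob X {Z. Y1 \<subseteq> Z} * measure_pmf.prob X {Z. Y2 \<subseteq> Z}"
    proof -
      have "measure_pmf.prob X {Z. Y1 \<union> Y2 \<subseteq> Z} = prod q (Y1 \<union> Y2)"
        using pi union_complex[OF a] by blast
      moreover have "measure_pmf.prob X {Z. Y1 \<inter> Y2 \<subseteq> Z} = prod q (Y1 \<inter> Y2)"
        using pi inter_complex[OF a] by blast
      moreover have "measure_pmf.prob X {Z. Y1 \<subseteq> Z} = prod q Y1" "measure_pmf.prob X {Z. Y2 \<subseteq> Z} = prod q Y2"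
        using pi a by blast+
      ultimately show ?thesis
        using prod.union_inter[OF finite_sub[OF a(1)] finite_sub[OF a(2)], of q] by simp
    qed
  qed
  have hom: "homogeneous n X"
    unfolding homogeneous_def
  proof (intro allI impI)
    fix g assume g: "g permutes {0..<n}"
    define X' where "X' = map_pmf (IG g) X"
    have ig: "(\<lambda>Y. (\<lambda>\<sigma>. g ` \<sigma>) ` Y) = IG g" unfolding IG_def by (rule refl)
    have gi: "inv g permutes {0..<n}" using permutes_inv[OF g] .
    have supp': "set_pmf X' \<subseteq> subcomplexes n"
      unfolding X'_def using supp perm_complex[OF g] by auto
    have pi': "\<forall>Y\<in>subcomplexes n. measure_pmf.prob X' {Z. Y \<subseteq> Z} = (\<Prod>\<sigma>\<in>Y. q \<sigma>)"
    proof
      fix Y assume Y: "Y \<in> subcomplexes n"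
      have "measure_pmf.prob X' {Z. Y \<subseteq> Z} = measure_pmf.prob X {Z. Y \<subseteq> IG g Z}"
        unfolding X'_def by (simp add: vimage_def)
      also have "{Z. Y \<subseteq> IG g Z} = {Z. IG (inv g) Y \<subseteq> Z}"
        using IG_subset[OF permutes_inj[OF g], of "IG (inv g) Y"] IG_inv[OF g, of Y] by auto
      also have "measure_pmf.prob X \<dots> = (\<Prod>\<sigma>\<in>IG (inv g) Y. q \<sigma>)"
        using pi perm_complex[OF gi Y] by blast
      also have "\<dots> = (\<Prod>\<sigma>\<in>Y. q \<sigma>)"
        unfolding q_def by (rule prod_IG[OF permutes_inj[OF gi]])
      finally show "measure_pmf.prob X' {Z. Y \<subseteq> Z} = (\<Prod>\<sigma>\<in>Y. q \<sigma>)" .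
    qed
    have "X' = X"
    proof (rule pmf_eqI)
      fix Y
      show "pmf X' Y = pmf X Y"
      proof (cases "Y \<in> subcomplexes n")
        case True
        then show ?thesis using pmf_from_pi[OF supp' pi' True] pm by simp
      next
        case False
        then show ?thesis using supp supp' by (metis pmf_eq_0_set_pmf subsetD)
      qed
    qed
    thus "map_pmf (\<lambda>Y. (\<lambda>\<sigma>. g ` \<sigma>) ` Y) X = X" unfolding ig X'_def .
  qed
  show ?thesis using si hom by blast
qed

definition Kc :: "nat set \<Rightarrow> nat set set" where "Kc \<sigma> = {\<tau>. \<tau> \<subseteq> \<sigma> \<and> \<tau> \<noteq> {}}"
definition Km :: "nat set \<Rightarrow> nat set set" where "Km \<sigma> = {\<tau>. \<tau> \<subset> \<sigma> \<and> \<tau> \<noteq> {}}"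

lemma Kc_complex: assumes "\<sigma> \<in> Wn n" shows "Kc \<sigma> \<in> subcomplexes n"
proof (rule complexI)
  have s: "\<sigma> \<subseteq> {0..<n}" using assms unfolding Wn_def by blast
  fix \<rho> assume "\<rho> \<in> Kc \<sigma>" thus "\<rho> \<noteq> {} \<and> \<rho> \<subseteq> {0..<n}" using s unfolding Kc_def by blast
next
  fix \<rho> \<tau> assume "\<rho> \<in> Kc \<sigma>" "\<tau> \<subseteq> \<rho>" "\<tau> \<noteq> {}" thus "\<tau> \<in> Kc \<sigma>" unfolding Kc_def by blast
qed

lemma Km_complex: assumes "\<sigma> \<in> Wn n" shows "Km \<sigma> \<in> subcomplexes n"
proof (rule complexI)
  have s: "\<sigma> \<subseteq> {0..<n}" using assms unfolding Wn_def by blast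
  fix \<rho> assume "\<rho> \<in> Km \<sigma>" thus "\<rho> \<noteq> {} \<and> \<rho> \<subseteq> {0..<n}" using s unfolding Km_def by blast
next
  fix \<rho> \<tau> assume "\<rho> \<in> Km \<sigma>" "\<tau> \<subseteq> \<rho>" "\<tau> \<noteq> {}" thus "\<tau> \<in> Km \<sigma>" unfolding Km_def by blast
qed

lemma pi_mono: "A \<subseteq> B \<Longrightarrow> measure_pmf.prob X {Z. B \<subseteq> Z} \<le> measure_pmf.prob X {Z. A \<subseteq> Z}"
  by (rule measure_pmf.finite_measure_mono) auto

lemma IG_Kc: assumes "bij g" shows "IG g (Kc \<sigma>) = Kc (g ` \<sigma>)" "IG g (Km \<sigma>) = Km (g ` \<sigma>)"
proof -
  have inj: "inj g" using assms bij_is_inj by blast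
  have surj: "g ` (inv g ` \<tau>) = \<tau>" for \<tau>
    using assms by (simp add: image_image bij_is_surj surj_f_inv_f)
  show "IG g (Kc \<sigma>) = Kc (g ` \<sigma>)"
  proof
    show "IG g (Kc \<sigma>) \<subseteq> Kc (g ` \<sigma>)" unfolding IG_def Kc_def by blast
    show "Kc (g ` \<sigma>) \<subseteq> IG g (Kc \<sigma>)"
    proof
      fix \<tau> assume t: "\<tau> \<in> Kc (g ` \<sigma>)"
      have "inv g ` \<tau> \<in> Kc \<sigma>"
        using t surj[of \<tau>] inj_image_subset_iff[OF inj, of "inv g ` \<tau>" \<sigma>] unfolding Kc_def by auto
      thus "\<tau> \<in> IG g (Kc \<sigma>)" unfolding IG_def using surj[of \<tau>] by (metis image_eqI)
    qed
  qed
  show "IG g (Km \<sigma>) = Km (g ` \<sigma>)"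
  proof
    show "IG g (Km \<sigma>) \<subseteq> Km (g ` \<sigma>)" unfolding IG_def Km_def
      using inj_image_subset_iff[OF inj] inj_image_eq_iff[OF inj] by blast
    show "Km (g ` \<sigma>) \<subseteq> IG g (Km \<sigma>)"
    proof
      fix \<tau> assume t: "\<tau> \<in> Km (g ` \<sigma>)"
      have "inv g ` \<tau> \<in> Km \<sigma>"
        using t surj[of \<tau>] inj_image_subset_iff[OF inj, of "inv g ` \<tau>" \<sigma>]
          inj_image_eq_iff[OF inj, of "inv g ` \<tau>" \<sigma>] unfolding Km_def by auto
      thus "\<tau> \<in> IG g (Km \<sigma>)" unfolding IG_def using surj[of \<tau>] by (metis image_eqI)
    qed
  qed
qed

lemma exists_perm:
  fixes \<sigma> \<tau> :: "nat set" and n :: nat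
  assumes s: "\<sigma> \<subseteq> {0..<n}" and t: "\<tau> \<subseteq> {0..<n}" and c: "card \<sigma> = card \<tau>"
  shows "\<exists>g. g permutes {0..<n} \<and> g ` \<sigma> = \<tau>"
proof -
  define N where "N = {0..<n}"
  have fN: "finite N" unfolding N_def by simp
  have sN: "\<sigma> \<subseteq> N" "\<tau> \<subseteq> N" using s t unfolding N_def by blast+
  have fs: "finite \<sigma>" "finite \<tau>" using sN fN finite_subset by blast+
  obtain f where f: "bij_betw f \<sigma> \<tau>" using finite_same_card_bij[OF fs c] by blast
  have "card (N - \<sigma>) = card (N - \<tau>)"
    using card_Diff_subset[OF fs(1) sN(1)] card_Diff_subset[OF fs(2) sN(2)] c by simp
  then obtain h where h: "bij_betw h (N - \<sigma>) (N - \<tau>)"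
    using finite_same_card_bij[of "N - \<sigma>" "N - \<tau>"] fN by blast
  define g where "g x = (if x \<in> \<sigma> then f x else if x \<in> N then h x else x)" for x
  have e1: "g a = f a" if "a \<in> \<sigma>" for a using that unfolding g_def by simp
  have e2: "g a = h a" if "a \<in> N - \<sigma>" for a using that unfolding g_def by simp
  have e3: "g a = a" if "a \<notin> N" for a using that sN unfolding g_def by (simp add: subset_iff) blast?
  have g1: "bij_betw g \<sigma> \<tau>" by (subst bij_betw_cong[OF e1]) (simp_all add: f)
  have g2: "bij_betw g (N - \<sigma>) (N - \<tau>)" by (subst bij_betw_cong[OF e2]) (simp_all add: h)
  have "bij_betw g (\<sigma> \<union> (N - \<sigma>)) (\<tau> \<union> (N - \<tau>))"
    by (rule bij_betw_combine[OF g1 g2]) blast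
  moreover have "\<sigma> \<union> (N - \<sigma>) = N" "\<tau> \<union> (N - \<tau>) = N" using sN by blast+
  ultimately have "bij_betw g N N" by simp
  hence "g permutes N" using e3 by (rule bij_imp_permutes)
  moreover have "g ` \<sigma> = \<tau>" using bij_betw_imp_surj_on[OF g1] .
  ultimately show ?thesis unfolding N_def by blast
qed

lemma pi_hom:
  assumes hom: "homogeneous n X" and g: "g permutes {0..<n}"
  shows "measure_pmf.prob X {Z. IG g A \<subseteq> Z} = measure_pmf.prob X {Z. A \<subseteq> Z}"
proof -
  have e: "map_pmf (IG g) X = X" using hom g unfolding homogeneous_def IG_def by blast
  have "measure_pmf.prob X {Z. IG g A \<subseteq> Z} = measure_pmf.prob (map_pmf (IG g) X) {Z. IG g A \<subseteq> Z}"
    by (simp only: e)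
  also have "\<dots> = measure_pmf.prob X {Z. IG g A \<subseteq> IG g Z}" by (simp add: vimage_def)
  also have "\<dots> = measure_pmf.prob X {Z. A \<subseteq> Z}"
    using IG_subset[OF permutes_inj[OF g]] by simp
  finally show ?thesis .
qed

lemma aux_div: "(x::real) * b = y * a \<Longrightarrow> b \<noteq> 0 \<Longrightarrow> x = y * (a / b)"
  by (simp add: field_simps)

lemma claimA:
  assumes si: "spatially_independent n X"
  defines "r \<equiv> \<lambda>\<sigma>. measure_pmf.prob X {Z. Kc \<sigma> \<subseteq> Z} / measure_pmf.prob X {Z. Km \<sigma> \<subseteq> Z}"
  shows "Y \<in> subcomplexes n \<Longrightarrow> measure_pmf.prob X {Z. Y \<subseteq> Z} = (\<Prod>\<sigma>\<in>Y. r \<sigma>)"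
proof (induction "card Y" arbitrary: Y rule: less_induct)
  case (less Y)
  note Y = less.prems
  have finY: "finite Y" using finite_sub[OF Y] .
  show ?case
  proof (cases "Y = {}")
    case True
    have u: "{Z. Y \<subseteq> Z} = (UNIV :: nat set set set)" using True by blast
    have "measure_pmf.prob X UNIV = 1" using measure_pmf.prob_space[of X] by simp
    then show ?thesis unfolding u using True by simp
  next
    case False
    have "Max (card ` Y) \<in> card ` Y" using Max_in[of "card ` Y"] finY False by simp
    then obtain \<sigma> where s: "\<sigma> \<in> Y" "card \<sigma> = Max (card ` Y)" by (metis imageE)
    have mx: "card \<tau> \<le> card \<sigma>" if "\<tau> \<in> Y" for \<tau> using s(2) finY that by simp
    have sW: "\<sigma> \<in> Wn n" using sub_Wn[OF Y] s(1) by blast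
    have fs: "finite \<sigma>" using Wn_card[OF sW] by blast
    define Y' where "Y' = Y - {\<sigma>}"
    have Y': "Y' \<in> subcomplexes n"
    proof (rule complexI)
      fix \<rho> assume "\<rho> \<in> Y'" thus "\<rho> \<noteq> {} \<and> \<rho> \<subseteq> {0..<n}" using complexD(1)[OF Y] unfolding Y'_def by blast
    next
      fix \<rho> \<tau> assume a: "\<rho> \<in> Y'" "\<tau> \<subseteq> \<rho>" "\<tau> \<noteq> {}"
      have "\<tau> \<in> Y" using complexD(2)[OF Y, of \<rho> \<tau>] a unfolding Y'_def by blast
      moreover have "\<tau> \<noteq> \<sigma>"
      proof
        assume "\<tau> = \<sigma>"
        hence "\<sigma> \<subset> \<rho>" using a unfolding Y'_def by blast
        moreover have "\<rho> \<in> Wn n" using sub_Wn[OF Y] a(1) unfolding Y'_def by blast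
        hence "finite \<rho>" using Wn_card by blast
        ultimately have "card \<sigma> < card \<rho>" by (rule psubset_card_mono[rotated])
        moreover have "card \<rho> \<le> card \<sigma>" using mx a(1) unfolding Y'_def by blast
        ultimately show False by simp
      qed
      ultimately show "\<tau> \<in> Y'" unfolding Y'_def by blast
    qed
    have KY: "Kc \<sigma> \<subseteq> Y" using complexD(2)[OF Y s(1)] unfolding Kc_def by blast
    have sne: "\<sigma> \<noteq> {}" using sW unfolding Wn_def by blast
    have sK: "\<sigma> \<in> Kc \<sigma>" using sne unfolding Kc_def by blast
    have U: "Y' \<union> Kc \<sigma> = Y"
    proof
      show "Y' \<union> Kc \<sigma> \<subseteq> Y" using KY unfolding Y'_def by blast
      show "Y \<subseteq> Y' \<union> Kc \<sigma>" using sK unfolding Y'_def by blast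
    qed
    have I: "Y' \<inter> Kc \<sigma> = Km \<sigma>"
    proof
      show "Y' \<inter> Kc \<sigma> \<subseteq> Km \<sigma>" unfolding Y'_def Kc_def Km_def by blast
      have "Km \<sigma> \<subseteq> Kc \<sigma>" unfolding Kc_def Km_def by blast
      moreover have "\<sigma> \<notin> Km \<sigma>" unfolding Km_def by blast
      ultimately show "Km \<sigma> \<subseteq> Y' \<inter> Kc \<sigma>" using KY unfolding Y'_def by blast
    qed
    have eq: "measure_pmf.prob X {Z. Y \<subseteq> Z} * measure_pmf.prob X {Z. Km \<sigma> \<subseteq> Z}
       = measure_pmf.prob X {Z. Y' \<subseteq> Z} * measure_pmf.prob X {Z. Kc \<sigma> \<subseteq> Z}"
    proof -
      have "\<forall>Y1\<in>subcomplexes n. \<forall>Y2\<in>subcomplexes n.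
        measure_pmf.prob X {Z. Y1 \<union> Y2 \<subseteq> Z} * measure_pmf.prob X {Z. Y1 \<inter> Y2 \<subseteq> Z}
        = measure_pmf.prob X {Z. Y1 \<subseteq> Z} * measure_pmf.prob X {Z. Y2 \<subseteq> Z}"
        using si unfolding spatially_independent_def .
      hence "measure_pmf.prob X {Z. Y' \<union> Kc \<sigma> \<subseteq> Z} * measure_pmf.prob X {Z. Y' \<inter> Kc \<sigma> \<subseteq> Z}
        = measure_pmf.prob X {Z. Y' \<subseteq> Z} * measure_pmf.prob X {Z. Kc \<sigma> \<subseteq> Z}"
        using Y' Kc_complex[OF sW] by blast
      thus ?thesis unfolding U I .
    qed
    have IH: "measure_pmf.prob X {Z. Y' \<subseteq> Z} = (\<Prod>\<sigma>\<in>Y'. r \<sigma>)"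
    proof -
      have "card Y' < card Y" using finY s(1) unfolding Y'_def by (rule card_Diff1_less)
      thus ?thesis using less.hyps[OF _ Y'] by blast
    qed
    have P: "(\<Prod>\<sigma>\<in>Y. r \<sigma>) = r \<sigma> * (\<Prod>\<sigma>\<in>Y'. r \<sigma>)"
      unfolding Y'_def using finY s(1) by (simp add: prod.remove)
    show ?thesis
    proof (cases "measure_pmf.prob X {Z. Km \<sigma> \<subseteq> Z} = 0")
      case True
      have "Km \<sigma> \<subseteq> Y" using KY unfolding Km_def Kc_def by blast
      hence "measure_pmf.prob X {Z. Y \<subseteq> Z} \<le> 0" using pi_mono[of "Km \<sigma>" Y X] True by simp
      hence "measure_pmf.prob X {Z. Y \<subseteq> Z} = 0" using measure_nonneg[of "measure_pmf X" "{Z. Y \<subseteq> Z}"] by linarith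
      moreover have "r \<sigma> = 0" unfolding r_def using True by simp
      ultimately show ?thesis using P by simp
    next
      case False
      have "measure_pmf.prob X {Z. Y \<subseteq> Z} = measure_pmf.prob X {Z. Y' \<subseteq> Z} * r \<sigma>"
        unfolding r_def using aux_div[OF eq False] by simp
      then show ?thesis using P IH by simp
    qed
  qed
qed

lemma div01: "0 \<le> (a::real) \<Longrightarrow> a \<le> b \<Longrightarrow> 0 \<le> a / b \<and> a / b \<le> 1"
  by (cases "b = 0") (auto simp: divide_le_eq_1)

lemma dir2:
  assumes rs: "random_subcomplex n X" and hom: "homogeneous n X" and si: "spatially_independent n X"
  shows "\<exists>p :: nat \<Rightarrow> real. (\<forall>i<n. 0 \<le> p i \<and> p i \<le> 1) \<and> is_multiparam n p X"
proof -
  define r where "r \<equiv> \<lambda>\<sigma>. measure_pmf.prob X {Z. Kc \<sigma> \<subseteq> Z} / measure_pmf.prob X {Z. Km \<sigma> \<subseteq> Z}"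
  have supp: "set_pmf X \<subseteq> subcomplexes n" using rs unfolding random_subcomplex_def .
  have A: "\<forall>Y\<in>subcomplexes n. measure_pmf.prob X {Z. Y \<subseteq> Z} = (\<Prod>\<sigma>\<in>Y. r \<sigma>)"
    using claimA[OF si] unfolding r_def by blast
  have rsym: "r \<sigma> = r \<tau>" if a: "\<sigma> \<in> Wn n" "\<tau> \<in> Wn n" "card \<sigma> = card \<tau>" for \<sigma> \<tau>
  proof -
    have st: "\<sigma> \<subseteq> {0..<n}" "\<tau> \<subseteq> {0..<n}" using a(1,2) unfolding Wn_def by blast+
    obtain g where g: "g permutes {0..<n}" "g ` \<sigma> = \<tau>"
      using exists_perm[OF st a(3)] by blast
    have b: "bij g" using permutes_bij[OF g(1)] .
    show ?thesis unfolding r_def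
      using pi_hom[OF hom g(1), of "Kc \<sigma>"] pi_hom[OF hom g(1), of "Km \<sigma>"] IG_Kc[OF b, of \<sigma>] g(2)
      by simp
  qed
  have rrange: "0 \<le> r \<sigma> \<and> r \<sigma> \<le> 1" for \<sigma>
  proof -
    have "Km \<sigma> \<subseteq> Kc \<sigma>" unfolding Km_def Kc_def by blast
    hence le: "measure_pmf.prob X {Z. Kc \<sigma> \<subseteq> Z} \<le> measure_pmf.prob X {Z. Km \<sigma> \<subseteq> Z}" by (rule pi_mono)
    show ?thesis unfolding r_def using le div01 measure_nonneg by blast
  qed
  define p where "p i = r {0..<Suc i}" for i
  have rp: "r \<sigma> = p (card \<sigma> - 1)" if "\<sigma> \<in> Wn n" for \<sigma>
  proof -
    have c: "1 \<le> card \<sigma>" "card \<sigma> \<le> n" using Wn_card[OF that] by blast+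
    have "{0..<Suc (card \<sigma> - 1)} \<in> Wn n" using c unfolding Wn_def by auto
    moreover have "card {0..<Suc (card \<sigma> - 1)} = card \<sigma>" using c by simp
    ultimately show ?thesis unfolding p_def using rsym[OF that] by metis
  qed
  have pi: "\<forall>Y\<in>subcomplexes n. measure_pmf.prob X {Z. Y \<subseteq> Z} = (\<Prod>\<sigma>\<in>Y. p (card \<sigma> - 1))"
  proof
    fix Y assume Y: "Y \<in> subcomplexes n"
    have "(\<Prod>\<sigma>\<in>Y. r \<sigma>) = (\<Prod>\<sigma>\<in>Y. p (card \<sigma> - 1))"
      using rp sub_Wn[OF Y] by (intro prod.cong) blast+
    thus "measure_pmf.prob X {Z. Y \<subseteq> Z} = (\<Prod>\<sigma>\<in>Y. p (card \<sigma> - 1))" using A Y by simp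
  qed
  have "is_multiparam n p X"
    unfolding is_multiparam_def
  proof (intro conjI ballI)
    show "random_subcomplex n X" by (rule rs)
    fix Y assume Y: "Y \<in> subcomplexes n"
    show "pmf X Y = mp_prob n p Y"
      using pmf_from_pi[OF supp pi Y] mp_eq[OF Y] by simp
  qed
  moreover have "\<forall>i<n. 0 \<le> p i \<and> p i \<le> 1" unfolding p_def using rrange by blast
  ultimately show ?thesis by blast
qed

theorem theorem3p3:
  fixes n :: nat
  shows "(\<forall>(p :: nat \<Rightarrow> real) X. (\<forall>i<n. 0 \<le> p i \<and> p i \<le> 1) \<and> is_multiparam n p X
            \<longrightarrow> homogeneous n X \<and> spatially_independent n X)
       \<and> (\<forall>X. random_subcomplex n X \<and> homogeneous n X \<and> spatially_independent n X
            \<longrightarrow> (\<exists>p :: nat \<Rightarrow> real. (\<forall>i<n. 0 \<le> p i \<and> p i \<le> 1) \<and> is_multiparam n p X))"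
  using dir1 dir2 by blast

end
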